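(* If $\mathbf A$ is a subdirectly irreducible algebra of type $F$, then every state-morphism algebra $(\mathbf A,\tau)$ is subdirectly irreducible.
   Context: A state-morphism on an algebra $\mathbf A$ of type $F$ is an endomorphism $\tau$ of $\mathbf A$ with $\tau\circ\tau=\tau$; $(\mathbf A,\tau)$ is a state-morphism algebra, i.e. the algebra of type $F$ extended by the unary operation $\tau$, and subdirect irreducibility refers to this extended algebra. *)

theory Defs
  imports Main
begin

definition is_algebra :: "'a set \<Rightarrow> ('f \<Rightarrow> nat) \<Rightarrow> ('f \<Rightarrow> 'a list \<Rightarrow> 'a) \<Rightarrow> bool" where
  "is_algebra A ar ops \<longleftrightarrow> A \<noteq> {} \<and>
     (\<forall>f xs. length xs = ar f \<and> set xs \<subseteq> A \<longrightarrow> ops f xs \<in> A)"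

definition congruence :: "'a set \<Rightarrow> ('f \<Rightarrow> nat) \<Rightarrow> ('f \<Rightarrow> 'a list \<Rightarrow> 'a) \<Rightarrow> 'a rel \<Rightarrow> bool" where
  "congruence A ar ops \<theta> \<longleftrightarrow> equiv A \<theta> \<and>
     (\<forall>f xs ys. length xs = ar f \<and> length ys = ar f \<and> set xs \<subseteq> A \<and> set ys \<subseteq> A \<and>
        list_all2 (\<lambda>x y. (x, y) \<in> \<theta>) xs ys \<longrightarrow> (ops f xs, ops f ys) \<in> \<theta>)"

definition subdirectly_irreducible :: "'a set \<Rightarrow> ('f \<Rightarrow> nat) \<Rightarrow> ('f \<Rightarrow> 'a list \<Rightarrow> 'a) \<Rightarrow> bool" where
  "subdirectly_irreducible A ar ops \<longleftrightarrow> is_algebra A ar ops \<and>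
     (\<exists>a\<in>A. \<exists>b\<in>A. a \<noteq> b) \<and>
     (\<exists>\<mu>. congruence A ar ops \<mu> \<and> \<mu> \<noteq> Id_on A \<and>
        (\<forall>\<psi>. congruence A ar ops \<psi> \<and> \<psi> \<noteq> Id_on A \<longrightarrow> \<mu> \<subseteq> \<psi>))"

definition endomorphism :: "'a set \<Rightarrow> ('f \<Rightarrow> nat) \<Rightarrow> ('f \<Rightarrow> 'a list \<Rightarrow> 'a) \<Rightarrow> ('a \<Rightarrow> 'a) \<Rightarrow> bool" where
  "endomorphism A ar ops h \<longleftrightarrow> h ` A \<subseteq> A \<and>
     (\<forall>f xs. length xs = ar f \<and> set xs \<subseteq> A \<longrightarrow> h (ops f xs) = ops f (map h xs))"

definition state_morphism :: "'a set \<Rightarrow> ('f \<Rightarrow> nat) \<Rightarrow> ('f \<Rightarrow> 'a list \<Rightarrow> 'a) \<Rightarrow> ('a \<Rightarrow> 'a) \<Rightarrow> bool" where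
  "state_morphism A ar ops \<tau> \<longleftrightarrow> endomorphism A ar ops \<tau> \<and> (\<forall>x\<in>A. \<tau> (\<tau> x) = \<tau> x)"

text \<open>The state-morphism algebra (A, tau): type F extended by one new unary symbol (None).\<close>

definition sm_arity :: "('f \<Rightarrow> nat) \<Rightarrow> 'f option \<Rightarrow> nat" where
  "sm_arity ar = case_option 1 ar"

definition sm_ops :: "('f \<Rightarrow> 'a list \<Rightarrow> 'a) \<Rightarrow> ('a \<Rightarrow> 'a) \<Rightarrow> 'f option \<Rightarrow> 'a list \<Rightarrow> 'a" where
  "sm_ops ops \<tau> = case_option (\<lambda>xs. \<tau> (hd xs)) ops"

end

theory Submission
  imports Defs
begin

lemma cong_sm_imp:
  assumes "congruence A (sm_arity ar) (sm_ops ops \<tau>) \<psi>"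
  shows "congruence A ar ops \<psi>"
proof -
  have "equiv A \<psi>" using assms unfolding congruence_def by blast
  moreover have "\<forall>f xs ys. length xs = ar f \<and> length ys = ar f \<and> set xs \<subseteq> A \<and> set ys \<subseteq> A \<and>
        list_all2 (\<lambda>x y. (x, y) \<in> \<psi>) xs ys \<longrightarrow> (ops f xs, ops f ys) \<in> \<psi>"
  proof (intro allI impI)
    fix f xs ys assume h: "length xs = ar f \<and> length ys = ar f \<and> set xs \<subseteq> A \<and> set ys \<subseteq> A \<and>
        list_all2 (\<lambda>x y. (x, y) \<in> \<psi>) xs ys"
    have "(sm_ops ops \<tau> (Some f) xs, sm_ops ops \<tau> (Some f) ys) \<in> \<psi>"
      using assms h unfolding congruence_def sm_arity_def by auto
    thus "(ops f xs, ops f ys) \<in> \<psi>" by (simp add: sm_ops_def)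
  qed
  ultimately show ?thesis unfolding congruence_def by blast
qed

lemma cong_Inter:
  assumes "\<S> \<noteq> {}" "\<And>\<psi>. \<psi> \<in> \<S> \<Longrightarrow> congruence A ar ops \<psi>"
  shows "congruence A ar ops (\<Inter>\<S>)"
proof -
  obtain \<psi>0 where p0: "\<psi>0 \<in> \<S>" using assms(1) by blast
  have eq: "\<And>\<psi>. \<psi> \<in> \<S> \<Longrightarrow> equiv A \<psi>" using assms(2) unfolding congruence_def by blast
  have "equiv A (\<Inter>\<S>)"
  proof (rule equivI)
    show "\<Inter>\<S> \<subseteq> A \<times> A" using eq[OF p0] p0 unfolding equiv_def by blast
    show "refl_on A (\<Inter>\<S>)"
    proof (rule refl_onI)
      fix x assume "x \<in> A"
      then show "(x, x) \<in> \<Inter>\<S>" using eq unfolding equiv_def refl_on_def by blast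
    qed
    show "sym (\<Inter>\<S>)"
    proof (rule symI)
      fix x y assume "(x, y) \<in> \<Inter>\<S>"
      then show "(y, x) \<in> \<Inter>\<S>" using eq unfolding equiv_def by (blast dest: symD)
    qed
    show "trans (\<Inter>\<S>)"
    proof (rule transI)
      fix x y z assume "(x, y) \<in> \<Inter>\<S>" "(y, z) \<in> \<Inter>\<S>"
      then show "(x, z) \<in> \<Inter>\<S>" using eq unfolding equiv_def by (blast dest: transD)
    qed
  qed
  moreover have "\<forall>f xs ys. length xs = ar f \<and> length ys = ar f \<and> set xs \<subseteq> A \<and> set ys \<subseteq> A \<and>
        list_all2 (\<lambda>x y. (x, y) \<in> \<Inter>\<S>) xs ys \<longrightarrow> (ops f xs, ops f ys) \<in> \<Inter>\<S>"
  proof (intro allI impI)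
    fix f xs ys assume h: "length xs = ar f \<and> length ys = ar f \<and> set xs \<subseteq> A \<and> set ys \<subseteq> A \<and>
        list_all2 (\<lambda>x y. (x, y) \<in> \<Inter>\<S>) xs ys"
    show "(ops f xs, ops f ys) \<in> \<Inter>\<S>"
    proof
      fix \<psi> assume ps: "\<psi> \<in> \<S>"
      have "list_all2 (\<lambda>x y. (x, y) \<in> \<psi>) xs ys"
        using h ps by (auto elim: list_all2_mono)
      thus "(ops f xs, ops f ys) \<in> \<psi>" using h assms(2)[OF ps] unfolding congruence_def by blast
    qed
  qed
  ultimately show ?thesis unfolding congruence_def by blast
qed

theorem theorem4p5:
  fixes A :: "'a set" and ar :: "'f \<Rightarrow> nat" and ops :: "'f \<Rightarrow> 'a list \<Rightarrow> 'a"
    and \<tau> :: "'a \<Rightarrow> 'a"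
  assumes "subdirectly_irreducible A ar ops"
    and "state_morphism A ar ops \<tau>"
  shows "subdirectly_irreducible A (sm_arity ar) (sm_ops ops \<tau>)"
proof -
  from assms(1) have alg: "is_algebra A ar ops" and nt: "\<exists>a\<in>A. \<exists>b\<in>A. a \<noteq> b"
    unfolding subdirectly_irreducible_def by blast+
  from assms(1) obtain \<mu> where mu: "congruence A ar ops \<mu>" "\<mu> \<noteq> Id_on A"
    "\<And>\<psi>. congruence A ar ops \<psi> \<Longrightarrow> \<psi> \<noteq> Id_on A \<Longrightarrow> \<mu> \<subseteq> \<psi>"
    unfolding subdirectly_irreducible_def by blast
  have tA: "\<tau> ` A \<subseteq> A" using assms(2) unfolding state_morphism_def endomorphism_def by blast
  let ?ar = "sm_arity ar" and ?ops = "sm_ops ops \<tau>"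
  have alg': "is_algebra A ?ar ?ops"
    unfolding is_algebra_def
  proof (intro conjI allI impI)
    show "A \<noteq> {}" using alg unfolding is_algebra_def by blast
    fix f xs assume h: "length xs = ?ar f \<and> set xs \<subseteq> A"
    show "?ops f xs \<in> A"
    proof (cases f)
      case None
      then obtain x where "xs = [x]" using h by (auto simp: sm_arity_def length_Suc_conv)
      then show ?thesis using None h tA by (auto simp: sm_ops_def)
    next
      case (Some g) then show ?thesis using h alg by (auto simp: sm_ops_def sm_arity_def is_algebra_def)
    qed
  qed
  define \<S> where "\<S> = {\<psi>. congruence A ?ar ?ops \<psi> \<and> \<psi> \<noteq> Id_on A}"
  have full: "A \<times> A \<in> \<S>"
  proof -
    have "equiv A (A \<times> A)" by (auto simp: equiv_def refl_on_def sym_def trans_def)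
    moreover have "\<forall>f xs ys. length xs = ?ar f \<and> length ys = ?ar f \<and> set xs \<subseteq> A \<and> set ys \<subseteq> A \<and>
        list_all2 (\<lambda>x y. (x, y) \<in> A \<times> A) xs ys \<longrightarrow> (?ops f xs, ?ops f ys) \<in> A \<times> A"
      using alg' unfolding is_algebra_def by blast
    moreover have "A \<times> A \<noteq> Id_on A" using nt by (auto simp: Id_on_def)
    ultimately show ?thesis unfolding \<S>_def congruence_def by blast
  qed
  have c: "congruence A ?ar ?ops (\<Inter>\<S>)"
    by (rule cong_Inter) (use full \<S>_def in auto)
  have sub: "\<mu> \<subseteq> \<Inter>\<S>"
    using mu(3) cong_sm_imp unfolding \<S>_def by blast
  have "Id_on A \<subseteq> \<mu>" using mu(1) unfolding congruence_def equiv_def refl_on_def by auto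
  hence "\<not> \<mu> \<subseteq> Id_on A" using mu(2) by blast
  hence ne: "\<Inter>\<S> \<noteq> Id_on A" using sub by blast
  have "\<forall>\<psi>. congruence A ?ar ?ops \<psi> \<and> \<psi> \<noteq> Id_on A \<longrightarrow> \<Inter>\<S> \<subseteq> \<psi>"
    unfolding \<S>_def by blast
  hence "\<exists>\<mu>. congruence A ?ar ?ops \<mu> \<and> \<mu> \<noteq> Id_on A \<and>
        (\<forall>\<psi>. congruence A ?ar ?ops \<psi> \<and> \<psi> \<noteq> Id_on A \<longrightarrow> \<mu> \<subseteq> \<psi>)"
    using c ne by (intro exI[of _ "\<Inter>\<S>"]) simp
  then show ?thesis unfolding subdirectly_irreducible_def using alg' nt by (intro conjI)
qed

end
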